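(* Let $I$ be a finite set. For each tree $T$ on $I$, the interval $[\hat{0},T]$ of the poset $\operatorname{For}(I)$ is a lattice.
   Context: A tree on a finite set $I$ is a (non-planar) rooted binary tree whose leaves are bijectively labeled by $I$: vertices are inner vertices (valence $3$) and leaves and the root (valence $1$), edges oriented towards the root; one-leaf trees are allowed. A forest on $I$ is a set of trees whose leaf sets partition $I$. For forests $F,G$ on $I$, $F \leq G$ if there is a continuous map $F\to G$ which (D1) is increasing with respect to orientation towards the root, (D2) maps inner vertices to inner vertices injectively, (D3) is the identity of $I$ on leaves, (D4) is injective on each tree of $F$. This gives the poset $\operatorname{For}(I)$, whose minimum $\hat{0}$ is the forest without inner vertices. *)

theory Defs
  imports "HOL-Algebra.Lattice"
begin

text \<open>
  A (non-planar, leaf-labelled, rooted binary) forest on I is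
  encoded, up to isomorphism, by its set of clusters: each vertex other than a root
  is represented by the set of leaves below it. Leaves are the singletons {i},
  inner vertices are the non-singleton clusters; the maximal clusters are the leaf
  sets of the trees of the forest (their root half-edges are left implicit).
\<close>

definition laminar :: "'a set set \<Rightarrow> bool" where
  "laminar F \<longleftrightarrow> (\<forall>A\<in>F. \<forall>B\<in>F. A \<subseteq> B \<or> B \<subseteq> A \<or> A \<inter> B = {})"

text \<open>Every inner vertex has exactly two children (its two maximal proper subclusters,
  which partition it).\<close>
definition forest_on :: "'a set \<Rightarrow> 'a set set \<Rightarrow> bool" where
  "forest_on I F \<longleftrightarrow>
     F \<subseteq> Pow I \<and> {} \<notin> F \<and> (\<forall>i\<in>I. {i} \<in> F) \<and> laminar F \<and>
     (\<forall>C\<in>F. (\<forall>i. C \<noteq> {i}) \<longrightarrow> (\<exists>A\<in>F. \<exists>B\<in>F. A \<inter> B = {} \<and> A \<union> B = C))"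

definition tree_on :: "'a set \<Rightarrow> 'a set set \<Rightarrow> bool" where
  "tree_on I T \<longleftrightarrow> forest_on I T \<and> I \<in> T"

definition bot_forest :: "'a set \<Rightarrow> 'a set set" where
  "bot_forest I = (\<lambda>i. {i}) ` I"

definition inner :: "'a set set \<Rightarrow> 'a set set" where
  "inner F = {C \<in> F. \<forall>i. C \<noteq> {i}}"

definition has_parent :: "'a set set \<Rightarrow> 'a set \<Rightarrow> bool" where
  "has_parent F A \<longleftrightarrow> (\<exists>C\<in>F. A \<subset> C)"

definition parent :: "'a set set \<Rightarrow> 'a set \<Rightarrow> 'a set" where
  "parent F A = (THE C. C \<in> F \<and> A \<subset> C \<and> (\<forall>D\<in>F. A \<subset> D \<longrightarrow> C \<subseteq> D))"

text \<open>The edges of G (each edge of G is named by its lower endpoint D) traversed by the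
  image under phi of the edge of F from A to its parent.\<close>
definition edge_image ::
  "'a set set \<Rightarrow> 'a set set \<Rightarrow> ('a set \<Rightarrow> 'a set) \<Rightarrow> 'a set \<Rightarrow> 'a set set" where
  "edge_image F G \<phi> A = {D \<in> G. \<phi> A \<subseteq> D \<and> D \<subset> \<phi> (parent F A)}"

text \<open>F \<le> G: there is a map of forests (sending vertices to vertices and edges to
  upward paths) which is increasing (D1), maps inner vertices injectively to inner
  vertices (D2), is the identity on leaves (D3) and is injective on each tree of F (D4):
  distinct edges of the same tree of F are sent to paths with no common edge.\<close>
definition forest_le :: "'a set set \<Rightarrow> 'a set set \<Rightarrow> bool" where
  "forest_le F G \<longleftrightarrow> (\<exists>\<phi>.
     (\<forall>C\<in>F. \<phi> C \<in> G) \<and>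
     (\<forall>i. {i} \<in> F \<longrightarrow> \<phi> {i} = {i}) \<and>
     (\<forall>C\<in>inner F. \<phi> C \<in> inner G) \<and> inj_on \<phi> (inner F) \<and>
     (\<forall>A\<in>F. has_parent F A \<longrightarrow> \<phi> A \<subset> \<phi> (parent F A)) \<and>
     (\<forall>A\<in>F. \<forall>A'\<in>F. A \<noteq> A' \<and> has_parent F A \<and> has_parent F A' \<and>
        (\<exists>R\<in>F. A \<union> A' \<subseteq> R) \<longrightarrow> edge_image F G \<phi> A \<inter> edge_image F G \<phi> A' = {}))"

definition forest_interval :: "'a set \<Rightarrow> 'a set set \<Rightarrow> 'a set set gorder" where
  "forest_interval I T =
     \<lparr>carrier = {F. forest_on I F \<and> forest_le (bot_forest I) F \<and> forest_le F T},
      eq = (=), le = forest_le\<rparr>"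

end

theory Submission
  imports Defs "HOL-Algebra.Complete_Lattice"
begin

lemma forest_onD:
  assumes "forest_on I F"
  shows "F \<subseteq> Pow I" "{} \<notin> F" "\<And>i. i \<in> I \<Longrightarrow> {i} \<in> F" "laminar F"
    "\<And>C. C \<in> F \<Longrightarrow> (\<forall>i. C \<noteq> {i}) \<Longrightarrow> \<exists>A\<in>F. \<exists>B\<in>F. A \<inter> B = {} \<and> A \<union> B = C"
  using assms unfolding forest_on_def by blast+

lemma laminarD: "laminar F \<Longrightarrow> A \<in> F \<Longrightarrow> B \<in> F \<Longrightarrow> A \<subseteq> B \<or> B \<subseteq> A \<or> A \<inter> B = {}"
  unfolding laminar_def by blast

definition lcaF :: "'a set set \<Rightarrow> 'a set \<Rightarrow> 'a set" where
  "lcaF F X = \<Inter>{E\<in>F. X \<subseteq> E}"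

lemma lca_ex:
  assumes "finite I" "F \<subseteq> Pow I" "laminar F" "X \<noteq> {}" "E0 \<in> F" "X \<subseteq> E0"
  shows "\<exists>E\<in>F. X \<subseteq> E \<and> (\<forall>E'\<in>F. X \<subseteq> E' \<longrightarrow> E \<subseteq> E')"
proof -
  obtain E where E: "E \<in> F \<and> X \<subseteq> E" and m: "\<forall>y. y \<in> F \<and> X \<subseteq> y \<longrightarrow> card E \<le> card y"
    using ex_has_least_nat[of "\<lambda>E. E \<in> F \<and> X \<subseteq> E" E0 card] assms by blast
  have "E \<subseteq> E'" if "E' \<in> F" "X \<subseteq> E'" for E'
  proof -
    have fin: "finite E'" "finite E" using assms E that by (meson PowD finite_subset subsetD)+
    from laminarD[OF assms(3) E[THEN conjunct1] that(1)] show ?thesis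
    proof (elim disjE)
      assume s: "E' \<subseteq> E"
      have "card E \<le> card E'" using m that by blast
      moreover have "card E' \<le> card E" using card_mono[OF fin(2) s] .
      ultimately have "E' = E" using card_subset_eq[OF fin(2) s] by simp
      then show ?thesis by simp
    next
      assume "E \<inter> E' = {}" then show ?thesis using E that assms(4) by blast
    qed
  qed
  then show ?thesis using E by blast
qed

lemma lcaF:
  assumes "finite I" "F \<subseteq> Pow I" "laminar F" "X \<noteq> {}" "E0 \<in> F" "X \<subseteq> E0"
  shows "lcaF F X \<in> F" "X \<subseteq> lcaF F X" "\<And>E'. E' \<in> F \<Longrightarrow> X \<subseteq> E' \<Longrightarrow> lcaF F X \<subseteq> E'"
proof -
  obtain E where E: "E\<in>F" "X \<subseteq> E" "\<forall>E'\<in>F. X \<subseteq> E' \<longrightarrow> E \<subseteq> E'"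
    using lca_ex[OF assms] by blast
  have "lcaF F X = E" unfolding lcaF_def using E by blast
  then show "lcaF F X \<in> F" "X \<subseteq> lcaF F X" "\<And>E'. E' \<in> F \<Longrightarrow> X \<subseteq> E' \<Longrightarrow> lcaF F X \<subseteq> E'"
    using E by auto
qed

lemma root_ex:
  assumes "finite I" "F \<subseteq> Pow I" "C \<in> F"
  shows "\<exists>R\<in>F. C \<subseteq> R \<and> \<not> has_parent F R"
proof -
  have b: "\<forall>y. y \<in> F \<and> C \<subseteq> y \<longrightarrow> card y < Suc (card I)"
    using assms by (meson PowD card_mono le_imp_less_Suc subsetD)
  obtain R where R: "R \<in> F \<and> C \<subseteq> R" and m: "\<forall>y. y \<in> F \<and> C \<subseteq> y \<longrightarrow> card y \<le> card R"
    using ex_has_greatest_nat[of "\<lambda>E. E \<in> F \<and> C \<subseteq> E" C card "Suc (card I)"] assms b by blast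
  have "\<not> has_parent F R"
  proof
    assume "has_parent F R"
    then obtain D where D: "D \<in> F" "R \<subset> D" unfolding has_parent_def by blast
    have "finite D" using D assms by (meson PowD finite_subset subsetD)
    then have "card R < card D" using D psubset_card_mono by blast
    moreover have "card D \<le> card R" using m D R by blast
    ultimately show False by simp
  qed
  then show ?thesis using R by blast
qed

lemma parent_props:
  assumes "finite I" "F \<subseteq> Pow I" "laminar F" "A \<in> F" "A \<noteq> {}" "has_parent F A"
  shows "parent F A \<in> F" "A \<subset> parent F A" "\<And>D. D \<in> F \<Longrightarrow> A \<subset> D \<Longrightarrow> parent F A \<subseteq> D"
proof -
  obtain E0 where E0: "E0 \<in> F" "A \<subset> E0" using assms(6) unfolding has_parent_def by blast
  obtain E where E: "E \<in> F \<and> A \<subset> E" and m: "\<forall>y. y \<in> F \<and> A \<subset> y \<longrightarrow> card E \<le> card y"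
    using ex_has_least_nat[of "\<lambda>E. E \<in> F \<and> A \<subset> E" E0 card] E0 by blast
  have min: "E \<subseteq> D" if "D \<in> F" "A \<subset> D" for D
  proof -
    have fin: "finite D" "finite E" using assms E that by (meson PowD finite_subset subsetD)+
    from laminarD[OF assms(3) E[THEN conjunct1] that(1)] show ?thesis
    proof (elim disjE)
      assume s: "D \<subseteq> E"
      have "card E \<le> card D" using m that by blast
      moreover have "card D \<le> card E" using card_mono[OF fin(2) s] .
      ultimately have "D = E" using card_subset_eq[OF fin(2) s] by simp
      then show ?thesis by simp
    next
      assume "E \<inter> D = {}" then show ?thesis using E that assms(5) by blast
    qed
  qed
  have "parent F A = E" unfolding parent_def
    apply (rule the_equality)
    using E min apply blast
    using E min by blast
  then show "parent F A \<in> F" "A \<subset> parent F A" "\<And>D. D \<in> F \<Longrightarrow> A \<subset> D \<Longrightarrow> parent F A \<subseteq> D"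
    using E min by auto
qed


lemma child_parent:
  assumes fo: "forest_on I F" "finite I" and AB: "A\<in>F" "B\<in>F" "A\<inter>B={}" "A\<noteq>{}" "B\<noteq>{}" "A\<union>B\<in>F"
  shows "has_parent F A" "parent F A = A\<union>B"
proof -
  note D = forest_onD[OF fo(1)]
  show hp: "has_parent F A" unfolding has_parent_def using AB by blast
  note pp = parent_props[OF fo(2) D(1) D(4) AB(1) AB(4) hp]
  have s: "parent F A \<subseteq> A\<union>B" using pp(3)[OF AB(6)] AB by blast
  then obtain b where b: "b \<in> parent F A" "b \<in> B" using pp(2) by blast
  from laminarD[OF D(4) AB(2) pp(1)] show "parent F A = A\<union>B"
  proof (elim disjE)
    assume "B \<subseteq> parent F A" then show ?thesis using s pp(2) by blast
  next
    assume "parent F A \<subseteq> B" then show ?thesis using pp(2) AB by blast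
  next
    assume "B \<inter> parent F A = {}" then show ?thesis using b by blast
  qed
qed

lemma parent_child:
  assumes fo: "forest_on I F" "finite I" and A: "A\<in>F" "has_parent F A"
  shows "\<exists>B\<in>F. B\<noteq>{} \<and> A\<inter>B={} \<and> parent F A = A\<union>B"
proof -
  note D = forest_onD[OF fo(1)]
  have Ane: "A \<noteq> {}" using A D(2) by blast
  note pp = parent_props[OF fo(2) D(1) D(4) A(1) Ane A(2)]
  have "\<forall>i. parent F A \<noteq> {i}" using pp(2) Ane by (metis psubsetE subset_singletonD)
  then obtain A' B' where AB: "A'\<in>F" "B'\<in>F" "A'\<inter>B'={}" "A'\<union>B' = parent F A"
    using D(5)[OF pp(1)] by blast
  have ne: "A' \<noteq> {}" "B' \<noteq> {}" using AB D(2) by auto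
  have key: "A = X" if X: "X \<in> F" "Y \<in> F" "X\<inter>Y={}" "X\<union>Y = parent F A" "X \<noteq> {}" "Y \<noteq> {}"
      "A \<inter> X \<noteq> {}" for X Y
  proof -
    from laminarD[OF D(4) A(1) X(1)] show ?thesis
    proof (elim disjE)
      assume s: "A \<subseteq> X"
      show ?thesis
      proof (rule ccontr)
        assume "A \<noteq> X"
        then have "A \<subset> X" using s by blast
        then have "parent F A \<subseteq> X" using pp(3) X by blast
        then show False using X by blast
      qed
    next
      assume s: "X \<subseteq> A"
      show ?thesis
      proof (rule ccontr)
        assume "A \<noteq> X"
        then have "A \<inter> Y \<noteq> {}" using s X pp(2) by blast
        from laminarD[OF D(4) A(1) X(2)] this show False
          using X pp(2) s by blast
      qed
    qed (use X in blast)
  qed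
  have "A \<inter> A' \<noteq> {} \<or> A \<inter> B' \<noteq> {}" using AB pp(2) Ane by blast
  then show ?thesis
  proof
    assume "A \<inter> A' \<noteq> {}"
    then have "A = A'" using key[of A' B'] AB ne by blast
    then show ?thesis using AB ne by blast
  next
    assume "A \<inter> B' \<noteq> {}"
    then have "A = B'" using key[of B' A'] AB ne by blast
    then show ?thesis using AB ne by blast
  qed
qed

lemma lca_children:
  assumes fo: "forest_on I F" "finite I" and X: "X \<noteq> {}" "D \<in> F" "X \<subseteq> D"
    and nt: "\<exists>x\<in>X. \<exists>y\<in>X. x \<noteq> y"
  shows "\<exists>A\<in>F. \<exists>B\<in>F. A\<inter>B={} \<and> A\<union>B = lcaF F X \<and> A \<noteq> {} \<and> B \<noteq> {} \<and> X\<inter>A \<noteq> {} \<and> X\<inter>B\<noteq>{}"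
proof -
  note D = forest_onD[OF fo(1)]
  note l = lcaF[OF fo(2) D(1) D(4) X]
  have "\<forall>i. lcaF F X \<noteq> {i}"
  proof (intro allI notI)
    fix i assume h: "lcaF F X = {i}"
    obtain x y where "x\<in>X" "y\<in>X" "x\<noteq>y" using nt by blast
    have "X \<subseteq> {i}" using l(2) unfolding h .
    then have "x = i" "y = i" using \<open>x\<in>X\<close> \<open>y\<in>X\<close> by blast+
    then show False using \<open>x\<noteq>y\<close> by simp
  qed
  then obtain A B where AB: "A\<in>F" "B\<in>F" "A\<inter>B={}" "A\<union>B = lcaF F X"
    using D(5)[OF l(1)] by blast
  have ne: "A \<noteq> {}" "B \<noteq> {}" using AB D(2) by auto
  have "\<not> X \<subseteq> A"
  proof
    assume "X \<subseteq> A" then have "lcaF F X \<subseteq> A" using l(3) AB by blast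
    then show False using AB ne by blast
  qed
  moreover have "\<not> X \<subseteq> B"
  proof
    assume "X \<subseteq> B" then have "lcaF F X \<subseteq> B" using l(3) AB by blast
    then show False using AB ne by blast
  qed
  ultimately have "X\<inter>A \<noteq> {}" "X\<inter>B \<noteq> {}" using l(2) AB(4) by blast+
  then show ?thesis using AB ne by (intro bexI[of _ A] bexI[of _ B]) simp_all
qed


locale fmap =
  fixes I :: "'a set" and F G :: "'a set set" and \<phi> :: "'a set \<Rightarrow> 'a set"
  assumes fin: "finite I" and fF: "forest_on I F" and fG: "forest_on I G"
    and m1: "\<forall>C\<in>F. \<phi> C \<in> G"
    and m2: "\<forall>i. {i} \<in> F \<longrightarrow> \<phi> {i} = {i}"
    and m3: "\<forall>C\<in>inner F. \<phi> C \<in> inner G"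
    and m4: "inj_on \<phi> (inner F)"
    and m5: "\<forall>A\<in>F. has_parent F A \<longrightarrow> \<phi> A \<subset> \<phi> (parent F A)"
    and m6: "\<forall>A\<in>F. \<forall>A'\<in>F. A \<noteq> A' \<and> has_parent F A \<and> has_parent F A' \<and>
        (\<exists>R\<in>F. A \<union> A' \<subseteq> R) \<longrightarrow> edge_image F G \<phi> A \<inter> edge_image F G \<phi> A' = {}"
begin

lemmas DF = forest_onD[OF fF]
lemmas DG = forest_onD[OF fG]

lemma pprops: "A \<in> F \<Longrightarrow> has_parent F A \<Longrightarrow>
   parent F A \<in> F \<and> A \<subset> parent F A \<and> (\<forall>D\<in>F. A \<subset> D \<longrightarrow> parent F A \<subseteq> D)"
  using parent_props[OF fin DF(1) DF(4)] DF(2) by blast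

lemma m6': "A\<in>F \<Longrightarrow> A'\<in>F \<Longrightarrow> A \<noteq> A' \<Longrightarrow> has_parent F A \<Longrightarrow> has_parent F A' \<Longrightarrow>
   R \<in> F \<Longrightarrow> A \<union> A' \<subseteq> R \<Longrightarrow> edge_image F G \<phi> A \<inter> edge_image F G \<phi> A' = {}"
  using m6 by blast

lemma finF: "C \<in> F \<Longrightarrow> finite C"
  using DF(1) fin by (meson PowD finite_subset subsetD)

lemma mono: "A \<in> F \<Longrightarrow> C \<in> F \<Longrightarrow> A \<subseteq> C \<Longrightarrow> \<phi> A \<subseteq> \<phi> C"
proof (induction "card C - card A" arbitrary: A rule: less_induct)
  case less
  show ?case
  proof (cases "A = C")
    case True then show ?thesis by simp
  next
    case False
    then have ps: "A \<subset> C" using less by blast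
    then have hp: "has_parent F A" unfolding has_parent_def using less by blast
    have pF: "parent F A \<in> F" and pA: "A \<subset> parent F A" and pm: "\<forall>D\<in>F. A \<subset> D \<longrightarrow> parent F A \<subseteq> D"
      using pprops[OF less(2) hp] by auto
    have pC: "parent F A \<subseteq> C" using pm ps less(3) by blast
    have c1: "card A < card (parent F A)" using psubset_card_mono[OF finF[OF pF] pA] .
    have c2: "card (parent F A) \<le> card C" using card_mono[OF finF[OF less(3)] pC] .
    have "card C - card (parent F A) < card C - card A" using c1 c2 by linarith
    then have "\<phi> (parent F A) \<subseteq> \<phi> C" using less(1) pF less(3) pC by blast
    moreover have "\<phi> A \<subset> \<phi> (parent F A)" using m5 less(2) hp by blast
    ultimately show ?thesis by blast
  qed
qed

lemma sub: "C \<in> F \<Longrightarrow> C \<subseteq> \<phi> C"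
proof
  fix i assume "C \<in> F" "i \<in> C"
  then have "{i} \<in> F" using DF(1) DF(3) by blast
  then have "\<phi> {i} \<subseteq> \<phi> C" using mono \<open>C \<in> F\<close> \<open>i \<in> C\<close> by blast
  then show "i \<in> \<phi> C" using m2 \<open>{i} \<in> F\<close> by simp
qed

lemma sib_disj:
  assumes AB: "A\<in>F" "B\<in>F" "A\<inter>B={}" "A\<noteq>{}" "B\<noteq>{}" "A\<union>B\<in>F"
  shows "\<phi> A \<inter> \<phi> B = {}"
proof -
  have cpA: "has_parent F A" "parent F A = A\<union>B" using child_parent[OF fF fin AB] by blast+
  have cpB: "has_parent F B" "parent F B = A\<union>B" using child_parent[OF fF fin AB(2,1) _ AB(5,4)] AB(3,6)
    by (simp_all add: Int_commute Un_commute)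
  have lt: "\<phi> A \<subset> \<phi> (A\<union>B)" "\<phi> B \<subset> \<phi> (A\<union>B)" using m5 cpA cpB AB by metis+
  have neq: "A \<noteq> B" using AB by blast
  have disj: "edge_image F G \<phi> A \<inter> edge_image F G \<phi> B = {}"
    using m6'[OF AB(1,2) neq cpA(1) cpB(1) AB(6)] by blast
  have GA: "\<phi> A \<in> G" "\<phi> B \<in> G" using m1 AB by blast+
  from laminarD[OF DG(4) GA] show ?thesis
  proof (elim disjE)
    assume s: "\<phi> A \<subseteq> \<phi> B"
    have "\<phi> B \<in> edge_image F G \<phi> A" unfolding edge_image_def using s lt cpA GA by simp
    moreover have "\<phi> B \<in> edge_image F G \<phi> B" unfolding edge_image_def using lt cpB GA by simp
    ultimately show ?thesis using disj by blast
  next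
    assume s: "\<phi> B \<subseteq> \<phi> A"
    have "\<phi> A \<in> edge_image F G \<phi> B" unfolding edge_image_def using s lt cpB GA by simp
    moreover have "\<phi> A \<in> edge_image F G \<phi> A" unfolding edge_image_def using lt cpA GA by simp
    ultimately show ?thesis using disj by blast
  qed
qed

lemma L1: "A \<in> F \<Longrightarrow> has_parent F A \<Longrightarrow> \<phi> A \<inter> parent F A = A"
proof -
  assume A: "A \<in> F" "has_parent F A"
  obtain B where B: "B\<in>F" "B\<noteq>{}" "A\<inter>B={}" "parent F A = A\<union>B" using parent_child[OF fF fin A] by blast
  have "A \<noteq> {}" using A DF(2) by blast
  then have "\<phi> A \<inter> \<phi> B = {}" using sib_disj[OF A(1) B(1) B(3) _ B(2)] B(4) pprops[OF A] by simp
  then have "\<phi> A \<inter> B = {}" using sub[OF B(1)] by blast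
  then show ?thesis using B(4) sub[OF A(1)] by blast
qed

lemma L2: "C \<in> F \<Longrightarrow> D \<in> F \<Longrightarrow> C \<subseteq> D \<Longrightarrow> \<phi> C \<inter> D = C"
proof (induction "card D - card C" arbitrary: C rule: less_induct)
  case less
  show ?case
  proof (cases "C = D")
    case True then show ?thesis using sub less by blast
  next
    case False
    then have ps: "C \<subset> D" using less by blast
    then have hp: "has_parent F C" unfolding has_parent_def using less by blast
    have pF: "parent F C \<in> F" and pA: "C \<subset> parent F C" and pm: "\<forall>E\<in>F. C \<subset> E \<longrightarrow> parent F C \<subseteq> E"
      using pprops[OF less(2) hp] by auto
    have pD: "parent F C \<subseteq> D" using pm ps less(3) by blast
    have c1: "card C < card (parent F C)" using psubset_card_mono[OF finF[OF pF] pA] .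
    have c2: "card (parent F C) \<le> card D" using card_mono[OF finF[OF less(3)] pD] .
    have "card D - card (parent F C) < card D - card C" using c1 c2 by linarith
    then have IH: "\<phi> (parent F C) \<inter> D = parent F C" using less(1) pF less(3) pD by blast
    have "\<phi> C \<subseteq> \<phi> (parent F C)" using m5 less(2) hp by blast
    then have "\<phi> C \<inter> D \<subseteq> \<phi> C \<inter> parent F C" using IH by blast
    also have "\<dots> = C" using L1 less(2) hp by blast
    finally show ?thesis using sub[OF less(2)] less(4) by blast
  qed
qed

lemma Klem:
  assumes AB: "A\<in>F" "B\<in>F" "A\<inter>B={}" "A\<noteq>{}" "B\<noteq>{}" "A\<union>B\<in>F"
    and E: "E \<in> G" "E \<inter> A \<noteq> {}" "E \<inter> B \<noteq> {}"
  shows "\<phi> (A\<union>B) \<subseteq> E"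
proof -
  have cpA: "has_parent F A" "parent F A = A\<union>B" using child_parent[OF fF fin AB] by blast+
  have cpB: "has_parent F B" "parent F B = A\<union>B" using child_parent[OF fF fin AB(2,1) _ AB(5,4)] AB(3,6)
    by (simp_all add: Int_commute Un_commute)
  have lt: "\<phi> A \<subset> \<phi> (A\<union>B)" "\<phi> B \<subset> \<phi> (A\<union>B)" using m5 cpA cpB AB by metis+
  have neq: "A \<noteq> B" using AB by blast
  have disj: "edge_image F G \<phi> A \<inter> edge_image F G \<phi> B = {}"
    using m6'[OF AB(1,2) neq cpA(1) cpB(1) AB(6)] by blast
  have GA: "\<phi> A \<in> G" "\<phi> B \<in> G" "\<phi> (A\<union>B) \<in> G" using m1 AB by blast+
  have l2A: "\<phi> A \<inter> (A\<union>B) = A" using L2[OF AB(1) AB(6)] by blast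
  have l2B: "\<phi> B \<inter> (A\<union>B) = B" using L2[OF AB(2) AB(6)] by blast
  have sA: "\<phi> A \<subseteq> E"
  proof -
    from laminarD[OF DG(4) GA(1) E(1)] show ?thesis
    proof (elim disjE)
      assume "E \<subseteq> \<phi> A"
      then have "E \<inter> B \<subseteq> \<phi> A \<inter> (A\<union>B)" by blast
      then show ?thesis using l2A AB(3) E(3) by blast
    next
      assume "\<phi> A \<inter> E = {}" then show ?thesis using sub[OF AB(1)] E(2) by blast
    qed
  qed
  have sB: "\<phi> B \<subseteq> E"
  proof -
    from laminarD[OF DG(4) GA(2) E(1)] show ?thesis
    proof (elim disjE)
      assume "E \<subseteq> \<phi> B"
      then have "E \<inter> A \<subseteq> \<phi> B \<inter> (A\<union>B)" by blast
      then show ?thesis using l2B AB(3) E(2) by blast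
    next
      assume "\<phi> B \<inter> E = {}" then show ?thesis using sub[OF AB(2)] E(3) by blast
    qed
  qed
  from laminarD[OF DG(4) GA(3) E(1)] show ?thesis
  proof (elim disjE)
    assume s: "E \<subseteq> \<phi> (A\<union>B)"
    show ?thesis
    proof (rule ccontr)
      assume "\<not> \<phi> (A\<union>B) \<subseteq> E"
      then have ps: "E \<subset> \<phi> (A\<union>B)" using s by blast
      have "E \<in> edge_image F G \<phi> A" unfolding edge_image_def using ps sA cpA E(1) by simp
      moreover have "E \<in> edge_image F G \<phi> B" unfolding edge_image_def using ps sB cpB E(1) by simp
      ultimately show False using disj by blast
    qed
  next
    assume "\<phi> (A\<union>B) \<inter> E = {}"
    then show ?thesis using sub[OF AB(6)] E(2) by blast
  qed
qed

lemma restr_in: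
  assumes J: "J \<in> F" and E: "E \<in> G" "E \<inter> J \<noteq> {}"
  shows "E \<inter> J \<in> F"
proof -
  let ?X = "E \<inter> J"
  have XJ: "?X \<subseteq> J" by blast
  note l = lcaF[OF fin DF(1) DF(4) E(2) J XJ]
  show ?thesis
  proof (cases "\<exists>x\<in>?X. \<exists>y\<in>?X. x \<noteq> y")
    case False
    obtain x where x: "x \<in> ?X" using E(2) by blast
    have "?X = {x}"
    proof
      show "?X \<subseteq> {x}" using False x by blast
    qed (use x in blast)
    moreover have "x \<in> I" using x J DF(1) by blast
    ultimately show ?thesis using DF(3) by simp
  next
    case True
    obtain A B where AB: "A\<in>F" "B\<in>F" "A\<inter>B={}" "A\<union>B = lcaF F ?X" "A \<noteq> {}" "B \<noteq> {}"
        "?X\<inter>A \<noteq> {}" "?X\<inter>B\<noteq>{}"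
      using lca_children[OF fF fin E(2) J XJ True] by blast
    have ABF: "A \<union> B \<in> F" using AB(4) l(1) by simp
    have EA: "E \<inter> A \<noteq> {}" "E \<inter> B \<noteq> {}" using AB(7,8) by blast+
    have "\<phi> (A\<union>B) \<subseteq> E" using Klem[OF AB(1,2,3,5,6) ABF E(1) EA] .
    then have "lcaF F ?X \<subseteq> E" using sub[OF ABF] AB(4) by simp
    moreover have "lcaF F ?X \<subseteq> J" using l(3)[OF J XJ] .
    ultimately have "lcaF F ?X = ?X" using l(2) by blast
    then show ?thesis using l(1) by simp
  qed
qed

lemma valid_roots:
  assumes J: "J \<in> F" "J' \<in> F" and X: "X \<subseteq> J" "X' \<subseteq> J'"
    and nt: "\<exists>x\<in>X. \<exists>y\<in>X. x \<noteq> y" "\<exists>x\<in>X'. \<exists>y\<in>X'. x \<noteq> y"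
    and eq: "lcaF G X = lcaF G X'"
  shows "J \<inter> J' \<noteq> {}"
proof -
  have key: "\<phi> (lcaF F Y) = lcaF G Y \<and> lcaF F Y \<in> inner F \<and> lcaF F Y \<subseteq> K"
    if Y: "K \<in> F" "Y \<subseteq> K" "\<exists>x\<in>Y. \<exists>y\<in>Y. x \<noteq> y" for K Y
  proof -
    have Yne: "Y \<noteq> {}" using Y by blast
    note l = lcaF[OF fin DF(1) DF(4) Yne Y(1,2)]
    have Gl: "\<phi> K \<in> G" "Y \<subseteq> \<phi> K" using m1 Y sub by blast+
    note lg = lcaF[OF fin DG(1) DG(4) Yne Gl]
    obtain A B where AB: "A\<in>F" "B\<in>F" "A\<inter>B={}" "A\<union>B = lcaF F Y" "A \<noteq> {}" "B \<noteq> {}"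
        "Y\<inter>A \<noteq> {}" "Y\<inter>B\<noteq>{}"
      using lca_children[OF fF fin Yne Y] by blast
    have ABF: "A \<union> B \<in> F" using AB(4) l(1) by simp
    have EA: "lcaF G Y \<inter> A \<noteq> {}" "lcaF G Y \<inter> B \<noteq> {}" using AB(7,8) lg(2) by blast+
    have e1: "\<phi> (A\<union>B) \<subseteq> lcaF G Y" using Klem[OF AB(1,2,3,5,6) ABF lg(1) EA] .
    have e2: "\<phi> (lcaF F Y) \<in> G" using m1 l(1) by blast
    have e3: "Y \<subseteq> \<phi> (lcaF F Y)" using l(2) sub[OF l(1)] by blast
    have "lcaF G Y \<subseteq> \<phi> (lcaF F Y)" using lg(3)[OF e2 e3] .
    with e1 have e: "\<phi> (lcaF F Y) = lcaF G Y" using AB(4) by (metis subset_antisym)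
    have "\<forall>i. lcaF F Y \<noteq> {i}"
    proof (intro allI notI)
      fix i assume h: "lcaF F Y = {i}"
      obtain x y where "x\<in>Y" "y\<in>Y" "x\<noteq>y" using Y(3) by blast
      have "Y \<subseteq> {i}" using l(2) unfolding h .
      then have "x = i" "y = i" using \<open>x\<in>Y\<close> \<open>y\<in>Y\<close> by blast+
      then show False using \<open>x\<noteq>y\<close> by simp
    qed
    then have "lcaF F Y \<in> inner F" unfolding inner_def using l(1) by blast
    then show ?thesis using e l(3)[OF Y(1,2)] by blast
  qed
  note k1 = key[OF J(1) X(1) nt(1)] and k2 = key[OF J(2) X(2) nt(2)]
  have "\<phi> (lcaF F X) = \<phi> (lcaF F X')" using k1 k2 eq by simp
  then have "lcaF F X = lcaF F X'" using inj_onD[OF m4] k1 k2 by blast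
  moreover have "lcaF F X \<in> F" using k1 unfolding inner_def by blast
  then have "lcaF F X \<noteq> {}" using DF(2) by metis
  ultimately show ?thesis using k1 k2 by blast
qed

end

definition Phi :: "'a set set \<Rightarrow> 'a set set \<Rightarrow> 'a set set" where
  "Phi T P = {C. \<exists>E J. E \<in> T \<and> J \<in> P \<and> C = E \<inter> J \<and> C \<noteq> {}}"

definition part :: "'a set \<Rightarrow> 'a set set \<Rightarrow> bool" where
  "part I P \<longleftrightarrow> {} \<notin> P \<and> \<Union>P = I \<and> (\<forall>J\<in>P. \<forall>J'\<in>P. J \<noteq> J' \<longrightarrow> J \<inter> J' = {})"

definition valid :: "'a set set \<Rightarrow> 'a set set \<Rightarrow> bool" where
  "valid T P \<longleftrightarrow> (\<forall>J\<in>P. \<forall>J'\<in>P. \<forall>X X'. X \<subseteq> J \<longrightarrow> X' \<subseteq> J' \<longrightarrow>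
      (\<exists>x\<in>X. \<exists>y\<in>X. x \<noteq> y) \<longrightarrow> (\<exists>x\<in>X'. \<exists>y\<in>X'. x \<noteq> y) \<longrightarrow> lcaF T X = lcaF T X' \<longrightarrow> J = J')"

definition refines :: "'a set set \<Rightarrow> 'a set set \<Rightarrow> bool" where
  "refines P Q \<longleftrightarrow> (\<forall>J\<in>P. \<exists>K\<in>Q. J \<subseteq> K)"

definition roots :: "'a set set \<Rightarrow> 'a set set" where
  "roots F = {C\<in>F. \<not> has_parent F C}"


lemma fmapI:
  assumes "finite I" "forest_on I F" "forest_on I G" "forest_le F G"
  obtains \<phi> where "fmap I F G \<phi>"
proof -
  obtain \<phi> where "(\<forall>C\<in>F. \<phi> C \<in> G) \<and>
     (\<forall>i. {i} \<in> F \<longrightarrow> \<phi> {i} = {i}) \<and>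
     (\<forall>C\<in>inner F. \<phi> C \<in> inner G) \<and> inj_on \<phi> (inner F) \<and>
     (\<forall>A\<in>F. has_parent F A \<longrightarrow> \<phi> A \<subset> \<phi> (parent F A)) \<and>
     (\<forall>A\<in>F. \<forall>A'\<in>F. A \<noteq> A' \<and> has_parent F A \<and> has_parent F A' \<and>
        (\<exists>R\<in>F. A \<union> A' \<subseteq> R) \<longrightarrow> edge_image F G \<phi> A \<inter> edge_image F G \<phi> A' = {})"
    using assms(4) unfolding forest_le_def by (rule exE)
  then have "fmap I F G \<phi>"
    apply -
    apply (rule fmap.intro[OF assms(1-3)])
    apply (elim conjE, assumption)+
    done
  then show ?thesis by (rule that)
qed

lemma roots_part:
  assumes fin: "finite I" and fF: "forest_on I F"
  shows "part I (roots F)"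
proof -
  note D = forest_onD[OF fF]
  have "{} \<notin> roots F" using D(2) unfolding roots_def by blast
  moreover have "\<Union>(roots F) = I"
  proof
    show "\<Union>(roots F) \<subseteq> I" using D(1) unfolding roots_def by blast
    show "I \<subseteq> \<Union>(roots F)"
    proof
      fix i assume i: "i \<in> I"
      obtain R where R: "R \<in> F" "{i} \<subseteq> R" "\<not> has_parent F R" using root_ex[OF fin D(1) D(3)[OF i]] by blast
      then have "R \<in> roots F" unfolding roots_def by blast
      then show "i \<in> \<Union>(roots F)" using R(2) by blast
    qed
  qed
  moreover have "\<forall>J\<in>roots F. \<forall>J'\<in>roots F. J \<noteq> J' \<longrightarrow> J \<inter> J' = {}"
  proof (intro ballI impI)
    fix J J' assume J: "J \<in> roots F" "J' \<in> roots F" "J \<noteq> J'"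
    have J1: "J \<in> F" "\<not> has_parent F J" "J' \<in> F" "\<not> has_parent F J'" using J(1,2) unfolding roots_def by blast+
    from laminarD[OF D(4) J1(1) J1(3)] show "J \<inter> J' = {}"
    proof (elim disjE)
      assume "J \<subseteq> J'" then have "J \<subset> J'" using J(3) by blast
      then have "has_parent F J" unfolding has_parent_def using J1(3) by blast
      then show ?thesis using J1(2) by blast
    next
      assume "J' \<subseteq> J" then have "J' \<subset> J" using J(3) by blast
      then have "has_parent F J'" unfolding has_parent_def using J1(1) by blast
      then show ?thesis using J1(4) by blast
    qed
  qed
  ultimately show ?thesis unfolding part_def by blast
qed

lemma le_refines:
  assumes fin: "finite I" and fF: "forest_on I F" and fG: "forest_on I G" and le: "forest_le F G"
  shows "refines (roots F) (roots G)"
proof -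
  obtain \<phi> where "fmap I F G \<phi>" using fmapI[OF fin fF fG le] by blast
  then interpret fmap I F G \<phi> .
  show ?thesis unfolding refines_def
  proof
    fix J assume J: "J \<in> roots F"
    then have JF: "J \<in> F" unfolding roots_def by blast
    have "\<phi> J \<in> G" using m1 JF by blast
    then obtain R where R: "R \<in> G" "\<phi> J \<subseteq> R" "\<not> has_parent G R" using root_ex[OF fin DG(1)] by blast
    then have "R \<in> roots G" unfolding roots_def by blast
    moreover have "J \<subseteq> R" using sub[OF JF] R(2) by blast
    ultimately show "\<exists>K\<in>roots G. J \<subseteq> K" by blast
  qed
qed

lemma bot_le:
  assumes fF: "forest_on I F"
  shows "forest_le (bot_forest I) F"
proof -
  note D = forest_onD[OF fF]
  have inn: "inner (bot_forest I) = {}" unfolding inner_def bot_forest_def by blast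
  have np: "\<not> has_parent (bot_forest I) A" if "A \<in> bot_forest I" for A
  proof
    assume "has_parent (bot_forest I) A"
    then obtain C where "C \<in> bot_forest I" "A \<subset> C" unfolding has_parent_def by blast
    then show False using that unfolding bot_forest_def by blast
  qed
  show ?thesis unfolding forest_le_def
  proof (intro exI[of _ id] conjI ballI allI impI)
    fix C assume "C \<in> bot_forest I" then show "id C \<in> F" using D(3) unfolding bot_forest_def by auto
  qed (use inn np in auto)
qed

lemma validD: "valid T P \<Longrightarrow> J\<in>P \<Longrightarrow> J'\<in>P \<Longrightarrow> X \<subseteq> J \<Longrightarrow> X' \<subseteq> J' \<Longrightarrow>
      x\<in>X \<Longrightarrow> y\<in>X \<Longrightarrow> x \<noteq> y \<Longrightarrow> x'\<in>X' \<Longrightarrow> y'\<in>X' \<Longrightarrow> x' \<noteq> y' \<Longrightarrow> lcaF T X = lcaF T X' \<Longrightarrow> J = J'"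
  unfolding valid_def by blast

lemma part_uniq: "part I P \<Longrightarrow> J\<in>P \<Longrightarrow> J'\<in>P \<Longrightarrow> X \<subseteq> J \<Longrightarrow> X \<subseteq> J' \<Longrightarrow> X \<noteq> {} \<Longrightarrow> J = J'"
  unfolding part_def by blast

lemma part_ex: "part I P \<Longrightarrow> x \<in> I \<Longrightarrow> \<exists>J\<in>P. x \<in> J"
  unfolding part_def by blast

lemma part_sub: "part I P \<Longrightarrow> J \<in> P \<Longrightarrow> J \<subseteq> I"
  unfolding part_def by blast

lemma part_ne: "part I P \<Longrightarrow> J \<in> P \<Longrightarrow> J \<noteq> {}"
  unfolding part_def by blast

lemma PhiE: "C \<in> Phi T P \<Longrightarrow> (\<And>E J. E \<in> T \<Longrightarrow> J \<in> P \<Longrightarrow> C = E \<inter> J \<Longrightarrow> C \<noteq> {} \<Longrightarrow> thesis) \<Longrightarrow> thesis"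
  unfolding Phi_def by blast

lemma PhiI: "E \<in> T \<Longrightarrow> J \<in> P \<Longrightarrow> E \<inter> J \<noteq> {} \<Longrightarrow> E \<inter> J \<in> Phi T P"
  unfolding Phi_def by blast

lemma Phi_blk: assumes "C \<in> Phi T P" shows "\<exists>J\<in>P. C \<subseteq> J"
proof -
  obtain E J where "E \<in> T" "J \<in> P" "C = E \<inter> J" using assms by (rule PhiE)
  then show ?thesis by blast
qed


definition mblk :: "'a set \<Rightarrow> 'a set set set \<Rightarrow> 'a \<Rightarrow> 'a set" where
  "mblk I PP x = {y\<in>I. \<forall>Q\<in>PP. \<exists>K\<in>Q. x\<in>K \<and> y\<in>K}"

definition mt :: "'a set \<Rightarrow> 'a set set set \<Rightarrow> 'a set set" where
  "mt I PP = mblk I PP ` I"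

lemma samek: "part I Q \<Longrightarrow> K\<in>Q \<Longrightarrow> K'\<in>Q \<Longrightarrow> a\<in>K \<Longrightarrow> a\<in>K' \<Longrightarrow> K=K'"
  unfolding part_def by blast

lemma mblk_self: assumes "\<forall>Q\<in>PP. part I Q" "x \<in> I" shows "x \<in> mblk I PP x"
proof -
  have "\<forall>Q\<in>PP. \<exists>K\<in>Q. x\<in>K \<and> x\<in>K"
  proof
    fix Q assume "Q \<in> PP"
    then have "part I Q" using assms(1) by blast
    then obtain K where "K \<in> Q" "x \<in> K" using part_ex[OF _ assms(2)] by blast
    then show "\<exists>K\<in>Q. x\<in>K \<and> x\<in>K" by blast
  qed
  then show ?thesis unfolding mblk_def using assms(2) by blast
qed

lemma mblk_sub: assumes "\<forall>Q\<in>PP. part I Q" and z: "z \<in> mblk I PP x" "z \<in> mblk I PP x'"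
  shows "mblk I PP x \<subseteq> mblk I PP x'"
proof
  fix y assume y: "y \<in> mblk I PP x"
  have "\<forall>Q\<in>PP. \<exists>K\<in>Q. x'\<in>K \<and> y\<in>K"
  proof
    fix Q assume Q: "Q \<in> PP"
    then have pQ: "part I Q" using assms(1) by blast
    obtain K1 where K1: "K1 \<in> Q" "x \<in> K1" "z \<in> K1" using z(1) Q unfolding mblk_def by blast
    obtain K2 where K2: "K2 \<in> Q" "x' \<in> K2" "z \<in> K2" using z(2) Q unfolding mblk_def by blast
    obtain K3 where K3: "K3 \<in> Q" "x \<in> K3" "y \<in> K3" using y Q unfolding mblk_def by blast
    have "K1 = K2" using samek[OF pQ K1(1) K2(1) K1(3) K2(3)] .
    moreover have "K1 = K3" using samek[OF pQ K1(1) K3(1) K1(2) K3(2)] .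
    ultimately show "\<exists>K\<in>Q. x'\<in>K \<and> y\<in>K" using K2 K3 by blast
  qed
  moreover have "y \<in> I" using y unfolding mblk_def by blast
  ultimately show "y \<in> mblk I PP x'" unfolding mblk_def by blast
qed

lemma mt_part: assumes "\<forall>Q\<in>PP. part I Q" shows "part I (mt I PP)"
  unfolding part_def
proof (intro conjI ballI impI)
  show "{} \<notin> mt I PP"
  proof
    assume "{} \<in> mt I PP"
    then obtain x where "x \<in> I" "{} = mblk I PP x" unfolding mt_def by blast
    then show False using mblk_self[OF assms, of x] by simp
  qed
  show "\<Union>(mt I PP) = I"
  proof
    show "\<Union>(mt I PP) \<subseteq> I" unfolding mt_def mblk_def by blast
    show "I \<subseteq> \<Union>(mt I PP)"
    proof
      fix x assume "x \<in> I"
      then have "x \<in> mblk I PP x" "mblk I PP x \<in> mt I PP" using mblk_self[OF assms] unfolding mt_def by blast+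
      then show "x \<in> \<Union>(mt I PP)" by blast
    qed
  qed
next
  fix J J' assume J: "J \<in> mt I PP" "J' \<in> mt I PP" "J \<noteq> J'"
  obtain x x' where x: "J = mblk I PP x" "J' = mblk I PP x'" using J(1,2) unfolding mt_def by blast
  show "J \<inter> J' = {}"
  proof (rule ccontr)
    assume "J \<inter> J' \<noteq> {}"
    then obtain z where z: "z \<in> mblk I PP x" "z \<in> mblk I PP x'" using x by blast
    have "mblk I PP x \<subseteq> mblk I PP x'" using mblk_sub[OF assms z(1) z(2)] .
    moreover have "mblk I PP x' \<subseteq> mblk I PP x" using mblk_sub[OF assms z(2) z(1)] .
    ultimately have "J = J'" using x by blast
    then show False using J(3) by blast
  qed
qed

lemma mt_ref: assumes "\<forall>Q\<in>PP. part I Q" "Q \<in> PP" shows "refines (mt I PP) Q"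
  unfolding refines_def
proof
  fix J assume "J \<in> mt I PP"
  then obtain x where x: "x \<in> I" "J = mblk I PP x" unfolding mt_def by blast
  have pQ: "part I Q" using assms by blast
  obtain K where K: "K \<in> Q" "x \<in> K" using part_ex[OF pQ x(1)] by blast
  have "J \<subseteq> K"
  proof
    fix y assume "y \<in> J"
    then obtain K' where "K' \<in> Q" "x \<in> K'" "y \<in> K'" using x(2) assms(2) unfolding mblk_def by blast
    then show "y \<in> K" using samek[OF pQ K(1) \<open>K' \<in> Q\<close> K(2)] by blast
  qed
  then show "\<exists>K\<in>Q. J \<subseteq> K" using K by blast
qed

lemma mt_glb: assumes "part I R" "\<forall>Q\<in>PP. refines R Q" shows "refines R (mt I PP)"
  unfolding refines_def
proof
  fix J assume J: "J \<in> R"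
  then obtain x where x: "x \<in> J" using part_ne[OF assms(1)] by blast
  have xI: "x \<in> I" using part_sub[OF assms(1) J] x by blast
  have "J \<subseteq> mblk I PP x"
  proof
    fix y assume y: "y \<in> J"
    have "\<forall>Q\<in>PP. \<exists>K\<in>Q. x\<in>K \<and> y\<in>K"
    proof
      fix Q assume "Q \<in> PP"
      then obtain K where "K \<in> Q" "J \<subseteq> K" using assms(2) J unfolding refines_def by blast
      then show "\<exists>K\<in>Q. x\<in>K \<and> y\<in>K" using x y by blast
    qed
    moreover have "y \<in> I" using part_sub[OF assms(1) J] y by blast
    ultimately show "y \<in> mblk I PP x" unfolding mblk_def by blast
  qed
  moreover have "mblk I PP x \<in> mt I PP" unfolding mt_def using xI by blast
  ultimately show "\<exists>K\<in>mt I PP. J \<subseteq> K" by blast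
qed

lemma mt_valid: assumes "\<forall>Q\<in>PP. part I Q \<and> valid T Q" shows "valid T (mt I PP)"
  unfolding valid_def
proof (intro ballI allI impI)
  have pp: "\<forall>Q\<in>PP. part I Q" using assms by blast
  fix J J' X X' assume J: "J \<in> mt I PP" "J' \<in> mt I PP" and X: "X \<subseteq> J" "X' \<subseteq> J'"
    and nt: "\<exists>x\<in>X. \<exists>y\<in>X. x \<noteq> y" "\<exists>x\<in>X'. \<exists>y\<in>X'. x \<noteq> y" and eq: "lcaF T X = lcaF T X'"
  obtain x x' where x: "x \<in> I" "J = mblk I PP x" "x' \<in> I" "J' = mblk I PP x'"
    using J unfolding mt_def by blast
  obtain a b where ab: "a \<in> X" "b \<in> X" "a \<noteq> b" using nt(1) by blast
  obtain a' b' where ab': "a' \<in> X'" "b' \<in> X'" "a' \<noteq> b'" using nt(2) by blast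
  have "\<forall>Q\<in>PP. \<exists>K\<in>Q. x\<in>K \<and> x'\<in>K"
  proof
    fix Q assume Q: "Q \<in> PP"
    have pQ: "part I Q" and vQ: "valid T Q" using assms Q by blast+
    obtain K where K: "K \<in> Q" "J \<subseteq> K" using mt_ref[OF pp Q] J(1) unfolding refines_def by blast
    obtain K' where K': "K' \<in> Q" "J' \<subseteq> K'" using mt_ref[OF pp Q] J(2) unfolding refines_def by blast
    have XK: "X \<subseteq> K" "X' \<subseteq> K'" using X K K' by blast+
    have "K = K'" using validD[OF vQ K(1) K'(1) XK ab ab' eq] .
    moreover have "x \<in> J" "x' \<in> J'" using mblk_self[OF pp] x by blast+
    ultimately show "\<exists>K\<in>Q. x\<in>K \<and> x'\<in>K" using K K' by blast
  qed
  then have "x' \<in> mblk I PP x" unfolding mblk_def using x(3) by blast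
  moreover have "x' \<in> mblk I PP x'" using mblk_self[OF pp x(3)] .
  ultimately have "mblk I PP x \<subseteq> mblk I PP x'" "mblk I PP x' \<subseteq> mblk I PP x"
    using mblk_sub[OF pp] by (metis, metis)
  then show "J = J'" using x by blast
qed

lemma refines_refl: "refines P P" unfolding refines_def by blast

lemma refines_trans: assumes "refines P Q" "refines Q R" shows "refines P R"
  unfolding refines_def
proof
  fix J assume "J \<in> P"
  then obtain K where K: "K \<in> Q" "J \<subseteq> K" using assms(1) unfolding refines_def by blast
  then obtain L where "L \<in> R" "K \<subseteq> L" using assms(2) unfolding refines_def by blast
  then show "\<exists>L\<in>R. J \<subseteq> L" using K(2) by blast
qed

lemma refines_antisym: assumes "part I P" "part I Q" "refines P Q" "refines Q P" shows "P = Q"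
proof -
  have "P \<subseteq> Q" if pP: "part I P" and pQ: "part I Q" and r: "refines P Q" "refines Q P" for P Q
  proof
    fix J assume J: "J \<in> P"
    obtain K where K: "K \<in> Q" "J \<subseteq> K" using r(1) J unfolding refines_def by blast
    obtain J' where J': "J' \<in> P" "K \<subseteq> J'" using r(2) K(1) unfolding refines_def by blast
    have "J = J'" using part_uniq[OF pP J J'(1) _ _ part_ne[OF pP J]] K(2) J'(2) by blast
    then have "J = K" using K J' by blast
    then show "J \<in> Q" using K by simp
  qed
  then show ?thesis using assms by blast
qed

locale tsetup =
  fixes I :: "'a set" and T :: "'a set set"
  assumes fin: "finite I" and tr: "tree_on I T"
begin

lemma fT: "forest_on I T" and IT: "I \<in> T"
  using tr unfolding tree_on_def by blast+

lemmas DT = forest_onD[OF fT]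

lemma Ine: "I \<noteq> {}" using IT DT(2) by blast

abbreviation t where "t X \<equiv> lcaF T X"

lemma tprops: assumes "X \<noteq> {}" "X \<subseteq> I" shows "t X \<in> T \<and> X \<subseteq> t X \<and> (\<forall>E\<in>T. X \<subseteq> E \<longrightarrow> t X \<subseteq> E)"
proof -
  note l = lcaF[OF fin DT(1) DT(4) assms(1) IT assms(2)]
  show ?thesis using l(1,2) l(3) by blast
qed

lemma Phi_sub: assumes "C \<in> Phi T P" shows "C \<subseteq> I"
proof -
  obtain E J where EJ: "E \<in> T" "J \<in> P" "C = E \<inter> J" using assms by (rule PhiE)
  have "E \<subseteq> I" using DT(1) EJ(1) by blast
  then show ?thesis using EJ(3) by blast
qed

lemma tcap: assumes P: "part I P" and C: "C \<in> Phi T P" and J: "J \<in> P" "C \<subseteq> J"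
  shows "t C \<inter> J = C"
proof -
  obtain E J' where EJ: "E \<in> T" "J' \<in> P" "C = E \<inter> J'" "C \<noteq> {}" using C by (rule PhiE)
  have "J' = J" using part_uniq[OF P EJ(2) J(1) _ J(2) EJ(4)] EJ(3) by blast
  have tp: "t C \<in> T" "C \<subseteq> t C" "t C \<subseteq> E" using tprops[OF EJ(4) Phi_sub[OF C]] EJ(1,3) by blast+
  show ?thesis using tp EJ(3) \<open>J' = J\<close> J(2) by blast
qed

lemma Phi_forest: assumes P: "part I P" shows "forest_on I (Phi T P)"
  unfolding forest_on_def
proof (intro conjI ballI allI impI)
  show "Phi T P \<subseteq> Pow I" using Phi_sub by blast
  show "{} \<notin> Phi T P" unfolding Phi_def by simp
next
  fix i assume i: "i \<in> I"
  obtain J where J: "J \<in> P" "i \<in> J" using part_ex[OF P i] by blast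
  have "{i} \<inter> J = {i}" using J by blast
  then show "{i} \<in> Phi T P" using PhiI[OF DT(3)[OF i] J(1)] by simp
next
  show "laminar (Phi T P)" unfolding laminar_def
  proof (intro ballI)
    fix A B assume A: "A \<in> Phi T P" and B: "B \<in> Phi T P"
    obtain E J where EJ: "E \<in> T" "J \<in> P" "A = E \<inter> J" using A by (rule PhiE)
    obtain E' J' where EJ': "E' \<in> T" "J' \<in> P" "B = E' \<inter> J'" using B by (rule PhiE)
    show "A \<subseteq> B \<or> B \<subseteq> A \<or> A \<inter> B = {}"
    proof (cases "J = J'")
      case True
      from laminarD[OF DT(4) EJ(1) EJ'(1)] show ?thesis using EJ(3) EJ'(3) True by blast
    next
      case False
      then have "J \<inter> J' = {}" using P EJ(2) EJ'(2) unfolding part_def by blast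
      then show ?thesis using EJ(3) EJ'(3) by blast
    qed
  qed
next
  fix C assume C: "C \<in> Phi T P" and ns: "\<forall>i. C \<noteq> {i}"
  obtain E J where EJ: "E \<in> T" "J \<in> P" "C = E \<inter> J" "C \<noteq> {}" using C by (rule PhiE)
  have CI: "C \<subseteq> I" using Phi_sub[OF C] .
  note tp = tprops[OF EJ(4) CI]
  have tc: "t C \<inter> J = C" using tcap[OF P C EJ(2)] EJ(3) by blast
  obtain x where x: "x \<in> C" using EJ(4) by blast
  have "C \<noteq> {x}" using ns by blast
  then obtain y where y: "y \<in> C" "y \<noteq> x" using x by blast
  have xy: "x \<in> C" "y \<in> C" "x \<noteq> y" using x y by auto
  have "\<forall>i. t C \<noteq> {i}"
  proof (intro allI notI)
    fix i assume h: "t C = {i}"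
    have "C \<subseteq> {i}" using tp unfolding h by blast
    then show False using xy by blast
  qed
  then have "\<exists>A\<in>T. \<exists>B\<in>T. A \<inter> B = {} \<and> A \<union> B = t C" using DT(5) tp by presburger
  then obtain v1 v2 where v: "v1 \<in> T" "v2 \<in> T" "v1 \<inter> v2 = {}" "v1 \<union> v2 = t C"
    by blast
  have v1n: "v1 \<inter> J \<noteq> {}"
  proof
    assume "v1 \<inter> J = {}"
    then have "C \<subseteq> v2" using tc v by blast
    then have "t C \<subseteq> v2" using tp v(2) by blast
    then have "v1 = {}" using v by blast
    then show False using v(1) DT(2) by blast
  qed
  have v2n: "v2 \<inter> J \<noteq> {}"
  proof
    assume "v2 \<inter> J = {}"
    then have "C \<subseteq> v1" using tc v by blast
    then have "t C \<subseteq> v1" using tp v(1) by blast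
    then have "v2 = {}" using v by blast
    then show False using v(2) DT(2) by blast
  qed
  have "v1 \<inter> J \<in> Phi T P" "v2 \<inter> J \<in> Phi T P" using PhiI v EJ(2) v1n v2n by blast+
  moreover have "(v1 \<inter> J) \<inter> (v2 \<inter> J) = {}" "(v1 \<inter> J) \<union> (v2 \<inter> J) = C" using v tc by blast+
  ultimately show "\<exists>A\<in>Phi T P. \<exists>B\<in>Phi T P. A \<inter> B = {} \<and> A \<union> B = C" by blast
qed

lemma Phi_roots: assumes P: "part I P" shows "roots (Phi T P) = P"
proof
  show "roots (Phi T P) \<subseteq> P"
  proof
    fix C assume C: "C \<in> roots (Phi T P)"
    then have C1: "C \<in> Phi T P" "\<not> has_parent (Phi T P) C" unfolding roots_def by blast+
    obtain E J where EJ: "E \<in> T" "J \<in> P" "C = E \<inter> J" "C \<noteq> {}" using C1(1) by (rule PhiE)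
    have "J \<in> Phi T P" using PhiI[OF IT EJ(2)] part_sub[OF P EJ(2)] part_ne[OF P EJ(2)]
      by (simp add: Int_absorb1)
    then have "C = J" using C1(2) EJ(3) unfolding has_parent_def by blast
    then show "C \<in> P" using EJ by simp
  qed
next
  show "P \<subseteq> roots (Phi T P)"
  proof
    fix J assume J: "J \<in> P"
    have JP: "J \<in> Phi T P" using PhiI[OF IT J] part_sub[OF P J] part_ne[OF P J]
      by (simp add: Int_absorb1)
    have "\<not> has_parent (Phi T P) J"
    proof
      assume "has_parent (Phi T P) J"
      then obtain D where D: "D \<in> Phi T P" "J \<subset> D" unfolding has_parent_def by blast
      obtain E J' where EJ: "E \<in> T" "J' \<in> P" "D = E \<inter> J'" using D(1) by (rule PhiE)
      have "J = J'" using part_uniq[OF P J EJ(2) _ _ part_ne[OF P J]] D(2) EJ(3) by blast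
      then show False using D(2) EJ(3) by blast
    qed
    then show "J \<in> roots (Phi T P)" unfolding roots_def using JP by blast
  qed
qed

lemma Phi_top: "Phi T {I} = T"
proof
  show "Phi T {I} \<subseteq> T"
  proof
    fix C assume "C \<in> Phi T {I}"
    then obtain E J where EJ: "E \<in> T" "J \<in> {I}" "C = E \<inter> J" by (rule PhiE)
    have "E \<subseteq> I" using DT(1) EJ(1) by blast
    then have "C = E" using EJ(2,3) by blast
    then show "C \<in> T" using EJ(1) by simp
  qed
  show "T \<subseteq> Phi T {I}"
  proof
    fix E assume E: "E \<in> T"
    then have "E \<inter> I = E" "E \<noteq> {}" using DT(1,2) by blast+
    then show "E \<in> Phi T {I}" using PhiI[OF E, of I "{I}"] by simp
  qed
qed


lemma phi_form:
  assumes P: "part I P" and Q: "part I Q" and C: "C \<in> Phi T P" and J: "J \<in> P" "C \<subseteq> J"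
    and K: "K \<in> Q" "J \<subseteq> K"
  shows "lcaF (Phi T Q) C = t C \<inter> K" "lcaF (Phi T Q) C \<in> Phi T Q" "C \<subseteq> lcaF (Phi T Q) C"
    "\<And>D. D \<in> Phi T Q \<Longrightarrow> C \<subseteq> D \<Longrightarrow> lcaF (Phi T Q) C \<subseteq> D"
proof -
  have CI: "C \<subseteq> I" using Phi_sub[OF C] .
  have Cne: "C \<noteq> {}" using C by (rule PhiE)
  have tp: "t C \<in> T" "C \<subseteq> t C" "\<And>E. E \<in> T \<Longrightarrow> C \<subseteq> E \<Longrightarrow> t C \<subseteq> E"
    using tprops[OF Cne CI] by blast+
  have CK: "C \<subseteq> t C \<inter> K" using tp(2) J(2) K(2) by blast
  have G0: "t C \<inter> K \<in> Phi T Q" using PhiI[OF tp(1) K(1)] CK Cne by blast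
  note fQ = forest_onD[OF Phi_forest[OF Q]]
  note lg = lcaF[OF fin fQ(1) fQ(4) Cne G0 CK]
  show "lcaF (Phi T Q) C \<in> Phi T Q" "C \<subseteq> lcaF (Phi T Q) C"
    "\<And>D. D \<in> Phi T Q \<Longrightarrow> C \<subseteq> D \<Longrightarrow> lcaF (Phi T Q) C \<subseteq> D" using lg by blast+
  have s1: "lcaF (Phi T Q) C \<subseteq> t C \<inter> K" using lg(3)[OF G0 CK] .
  obtain E K' where EK: "E \<in> T" "K' \<in> Q" "lcaF (Phi T Q) C = E \<inter> K'" using lg(1) by (rule PhiE)
  have "C \<subseteq> K'" using lg(2) EK(3) by blast
  then have "K' = K" using part_uniq[OF Q EK(2) K(1) _ _ Cne] CK by blast
  moreover have "t C \<subseteq> E" using tp(3)[OF EK(1)] lg(2) EK(3) by blast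
  ultimately have "t C \<inter> K \<subseteq> lcaF (Phi T Q) C" using EK(3) by blast
  then show "lcaF (Phi T Q) C = t C \<inter> K" using s1 by blast
qed

lemma Phi_le:
  assumes P: "part I P" "valid T P" and Q: "part I Q" and R: "refines P Q"
  shows "forest_le (Phi T P) (Phi T Q)"
proof -
  let ?F = "Phi T P" and ?G = "Phi T Q"
  let ?f = "lcaF ?G"
  have blk: "\<exists>J K. J \<in> P \<and> C \<subseteq> J \<and> K \<in> Q \<and> J \<subseteq> K" if C: "C \<in> ?F" for C
  proof -
    obtain J where "J \<in> P" "C \<subseteq> J" using Phi_blk[OF C] by blast
    moreover obtain K where "K \<in> Q" "J \<subseteq> K" using R calculation(1) unfolding refines_def by blast
    ultimately show ?thesis by blast
  qed
  note fP = forest_onD[OF Phi_forest[OF P(1)]]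
  note fQ = forest_onD[OF Phi_forest[OF Q]]
  have inG: "?f C \<in> ?G" "C \<subseteq> ?f C" "\<And>D. D \<in> ?G \<Longrightarrow> C \<subseteq> D \<Longrightarrow> ?f C \<subseteq> D" if C: "C \<in> ?F" for C
  proof -
    obtain J K where "J \<in> P" "C \<subseteq> J" "K \<in> Q" "J \<subseteq> K" using blk[OF C] by blast
    note pf = phi_form[OF P(1) Q C this]
    show "?f C \<in> ?G" "C \<subseteq> ?f C" "\<And>D. D \<in> ?G \<Longrightarrow> C \<subseteq> D \<Longrightarrow> ?f C \<subseteq> D" using pf(2,3,4) by blast+
  qed
  have capJ: "?f C \<inter> J = C" if C: "C \<in> ?F" and J: "J \<in> P" "C \<subseteq> J" for C J
  proof -
    obtain J' K where JK: "J' \<in> P" "C \<subseteq> J'" "K \<in> Q" "J' \<subseteq> K" using blk[OF C] by blast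
    have Cne: "C \<noteq> {}" using C by (rule PhiE)
    have "J' = J" using part_uniq[OF P(1) JK(1) J(1) JK(2) J(2) Cne] .
    then have "?f C = t C \<inter> K" using phi_form[OF P(1) Q C JK] by simp
    then show ?thesis using tcap[OF P(1) C J] JK \<open>J' = J\<close> by blast
  qed
  show ?thesis unfolding forest_le_def
  proof (intro exI[of _ ?f] conjI ballI allI impI)
    fix C assume "C \<in> ?F" then show "?f C \<in> ?G" using inG by blast
  next
    fix i assume i: "{i} \<in> ?F"
    have "i \<in> I" using Phi_sub[OF i] by blast
    then have "{i} \<in> ?G" using fQ(3) by blast
    then have "?f {i} \<subseteq> {i}" using inG(3)[OF i] by blast
    then show "?f {i} = {i}" using inG(2)[OF i] by blast
  next
    fix C assume C: "C \<in> inner ?F"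
    then have C1: "C \<in> ?F" "\<forall>i. C \<noteq> {i}" unfolding inner_def by blast+
    have "\<forall>i. ?f C \<noteq> {i}"
    proof (intro allI notI)
      fix i assume h: "?f C = {i}"
      have "C \<noteq> {}" using C1(1) by (rule PhiE)
      moreover have "C \<subseteq> {i}" using inG(2)[OF C1(1)] unfolding h .
      ultimately have "C = {i}" by blast
      then show False using C1(2) by blast
    qed
    then show "?f C \<in> inner ?G" unfolding inner_def using inG(1)[OF C1(1)] by blast
  next
    show "inj_on ?f (inner ?F)"
    proof (rule inj_onI)
      fix C C' assume C: "C \<in> inner ?F" and C': "C' \<in> inner ?F" and eq: "?f C = ?f C'"
      have C1: "C \<in> ?F" "\<forall>i. C \<noteq> {i}" using C unfolding inner_def by blast+
      have C1': "C' \<in> ?F" "\<forall>i. C' \<noteq> {i}" using C' unfolding inner_def by blast+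
      obtain J K where JK: "J \<in> P" "C \<subseteq> J" "K \<in> Q" "J \<subseteq> K" using blk[OF C1(1)] by blast
      obtain J' K' where JK': "J' \<in> P" "C' \<subseteq> J'" "K' \<in> Q" "J' \<subseteq> K'" using blk[OF C1'(1)] by blast
      have Cne: "C \<noteq> {}" using C1(1) by (rule PhiE)
      have Cne': "C' \<noteq> {}" using C1'(1) by (rule PhiE)
      note pf = phi_form[OF P(1) Q C1(1) JK] and pf' = phi_form[OF P(1) Q C1'(1) JK']
      have "C \<subseteq> K'" using pf(3) pf'(1) eq by blast
      then have KK: "K = K'" using part_uniq[OF Q JK(3) JK'(3) _ _ Cne] JK by blast
      have CI: "C \<subseteq> I" "C' \<subseteq> I" using Phi_sub C1(1) C1'(1) by blast+
      have tp: "t C \<in> T" "C \<subseteq> t C" "\<And>E. E \<in> T \<Longrightarrow> C \<subseteq> E \<Longrightarrow> t C \<subseteq> E"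
        using tprops[OF Cne CI(1)] by blast+
      have tp': "t C' \<in> T" "C' \<subseteq> t C'" "\<And>E. E \<in> T \<Longrightarrow> C' \<subseteq> E \<Longrightarrow> t C' \<subseteq> E"
        using tprops[OF Cne' CI(2)] by blast+
      have e: "t C \<inter> K = t C' \<inter> K" using pf(1) pf'(1) eq KK by simp
      have "C \<subseteq> t C'" using pf(3) pf(1) e by blast
      then have a: "t C \<subseteq> t C'" using tp(3)[OF tp'(1)] by blast
      have "C' \<subseteq> t C" using pf'(3) pf'(1) e KK by blast
      then have "t C' \<subseteq> t C" using tp'(3)[OF tp(1)] by blast
      with a have teq: "t C = t C'" by blast
      obtain x where x: "x \<in> C" using Cne by blast
      have "C \<noteq> {x}" using C1(2) by blast
      then obtain y where y: "y \<in> C" "y \<noteq> x" using x by blast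
      obtain x' where x': "x' \<in> C'" using Cne' by blast
      have "C' \<noteq> {x'}" using C1'(2) by blast
      then obtain y' where y': "y' \<in> C'" "y' \<noteq> x'" using x' by blast
      have "J = J'" using validD[OF P(2) JK(1) JK'(1) JK(2) JK'(2) x y(1) y(2)[symmetric] x' y'(1) y'(2)[symmetric] teq] .
      have "C = t C \<inter> J" using tcap[OF P(1) C1(1) JK(1,2)] by (rule sym)
      also have "\<dots> = t C' \<inter> J'" using teq \<open>J = J'\<close> by (rule arg_cong2)
      also have "\<dots> = C'" using tcap[OF P(1) C1'(1) JK'(1,2)] .
      finally show "C = C'" .
    qed
  next
    fix A assume A: "A \<in> ?F" and hp: "has_parent ?F A"
    have Ane: "A \<noteq> {}" using A by (rule PhiE)
    have pp: "parent ?F A \<in> ?F" "A \<subset> parent ?F A"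
      using parent_props[OF fin fP(1) fP(4) A Ane hp] by blast+
    obtain J K where JK: "J \<in> P" "A \<subseteq> J" "K \<in> Q" "J \<subseteq> K" using blk[OF A] by blast
    obtain J' where J': "J' \<in> P" "parent ?F A \<subseteq> J'" using Phi_blk[OF pp(1)] by blast
    have "J' = J" using part_uniq[OF P(1) J'(1) JK(1) _ JK(2) Ane] J'(2) pp(2) by blast
    then have pJ: "parent ?F A \<subseteq> J" using J' by simp
    have "?f A \<subseteq> ?f (parent ?F A)" using inG(3)[OF A inG(1)[OF pp(1)]] inG(2)[OF pp(1)] pp(2) by blast
    moreover have "?f A \<noteq> ?f (parent ?F A)"
    proof
      assume "?f A = ?f (parent ?F A)"
      then have e: "?f A \<inter> J = ?f (parent ?F A) \<inter> J" by (rule arg_cong)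
      have "A = ?f A \<inter> J" using capJ[OF A JK(1,2)] by (rule sym)
      also have "\<dots> = ?f (parent ?F A) \<inter> J" by (rule e)
      also have "\<dots> = parent ?F A" using capJ[OF pp(1) JK(1) pJ] .
      finally have "A = parent ?F A" .
      then show False using pp(2) by blast
    qed
    ultimately show "?f A \<subset> ?f (parent ?F A)" by blast
  next
    fix A A' assume A: "A \<in> ?F" and A': "A' \<in> ?F"
      and H: "A \<noteq> A' \<and> has_parent ?F A \<and> has_parent ?F A' \<and> (\<exists>R\<in>?F. A \<union> A' \<subseteq> R)"
    then have ne: "A \<noteq> A'" and hp: "has_parent ?F A" and hp': "has_parent ?F A'" by blast+
    obtain Rr where Rr: "Rr \<in> ?F" "A \<union> A' \<subseteq> Rr" using H by blast
    obtain J K where JK: "J \<in> P" "Rr \<subseteq> J" "K \<in> Q" "J \<subseteq> K" using blk[OF Rr(1)] by blast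
    have Ane: "A \<noteq> {}" using A by (rule PhiE)
    have Ane': "A' \<noteq> {}" using A' by (rule PhiE)
    have AJ: "A \<subseteq> J" "A' \<subseteq> J" using Rr(2) JK(2) by blast+
    have key: "D \<inter> J = B"
      if B: "B \<in> ?F" "B \<subseteq> J" "B \<noteq> {}" "has_parent ?F B" and D: "D \<in> edge_image ?F ?G ?f B" for B D
    proof -
      have pp: "parent ?F B \<in> ?F" "B \<subset> parent ?F B" "\<And>E. E \<in> ?F \<Longrightarrow> B \<subset> E \<Longrightarrow> parent ?F B \<subseteq> E"
        using parent_props[OF fin fP(1) fP(4) B(1) B(3) B(4)] by blast+
      have D1: "D \<in> ?G" "?f B \<subseteq> D" "D \<subset> ?f (parent ?F B)" using D unfolding edge_image_def by blast+
      obtain J' where J': "J' \<in> P" "parent ?F B \<subseteq> J'" using Phi_blk[OF pp(1)] by blast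
      have "J' = J" using part_uniq[OF P(1) J'(1) JK(1) _ B(2) B(3)] J'(2) pp(2) by blast
      then have pJ: "parent ?F B \<subseteq> J" using J' by simp
      obtain E K' where EK: "E \<in> T" "K' \<in> Q" "D = E \<inter> K'" using D1(1) by (rule PhiE)
      have BD: "B \<subseteq> D" using D1(2) inG(2)[OF B(1)] by blast
      have BK': "B \<subseteq> K'" using BD EK(3) by blast
      have BK: "B \<subseteq> K" using B(2) JK(4) by blast
      have "K' = K" using part_uniq[OF Q EK(2) JK(3) BK' BK B(3)] .
      then have DJ: "D \<inter> J = E \<inter> J" using EK(3) JK(4) by auto
      have "B \<subseteq> E \<inter> J" using BD B(2) EK(3) by blast
      then have "E \<inter> J \<noteq> {}" using B(3) by blast
      then have DJF: "D \<inter> J \<in> ?F" unfolding DJ by (rule PhiI[OF EK(1) JK(1)])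
      have "D \<inter> J \<subseteq> ?f (parent ?F B) \<inter> J" using D1(3) by blast
      also have "\<dots> = parent ?F B" using capJ[OF pp(1) JK(1) pJ] .
      finally have s: "D \<inter> J \<subseteq> parent ?F B" .
      show ?thesis
      proof (rule ccontr)
        assume "D \<inter> J \<noteq> B"
        then have "B \<subset> D \<inter> J" using BD B(2) by blast
        then have "parent ?F B \<subseteq> D \<inter> J" using pp(3)[OF DJF] by blast
        then have "parent ?F B \<subseteq> D" by blast
        then have "?f (parent ?F B) \<subseteq> D" using inG(3)[OF pp(1) D1(1)] by blast
        then show False using D1(3) by blast
      qed
    qed
    show "edge_image ?F ?G ?f A \<inter> edge_image ?F ?G ?f A' = {}"
    proof (rule ccontr)
      assume "edge_image ?F ?G ?f A \<inter> edge_image ?F ?G ?f A' \<noteq> {}"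
      then obtain D where D: "D \<in> edge_image ?F ?G ?f A" "D \<in> edge_image ?F ?G ?f A'" by blast
      have "D \<inter> J = A" using key[OF A AJ(1) Ane hp D(1)] .
      moreover have "D \<inter> J = A'" using key[OF A' AJ(2) Ane' hp' D(2)] .
      ultimately show False using ne by simp
    qed
  qed
qed


lemma carrier_char:
  assumes fF: "forest_on I F" and le: "forest_le F T"
  shows "part I (roots F)" "valid T (roots F)" "F = Phi T (roots F)"
proof -
  obtain \<phi> where "fmap I F T \<phi>" using fmapI[OF fin fF fT le] by blast
  then interpret fmap I F T \<phi> .
  show P: "part I (roots F)" using roots_part[OF fin fF] .
  show "valid T (roots F)" unfolding valid_def
  proof (intro ballI allI impI)
    fix J J' X X' assume J: "J \<in> roots F" "J' \<in> roots F" and X: "X \<subseteq> J" "X' \<subseteq> J'"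
      and nt: "\<exists>x\<in>X. \<exists>y\<in>X. x \<noteq> y" "\<exists>x\<in>X'. \<exists>y\<in>X'. x \<noteq> y" and eq: "lcaF T X = lcaF T X'"
    have JF: "J \<in> F" "J' \<in> F" using J unfolding roots_def by blast+
    have "J \<inter> J' \<noteq> {}" using valid_roots[OF JF X nt eq] .
    then show "J = J'" using P J unfolding part_def by blast
  qed
  show "F = Phi T (roots F)"
  proof
    show "F \<subseteq> Phi T (roots F)"
    proof
      fix C assume C: "C \<in> F"
      obtain R where R: "R \<in> F" "C \<subseteq> R" "\<not> has_parent F R" using root_ex[OF fin DF(1) C] by blast
      have Rr: "R \<in> roots F" using R unfolding roots_def by blast
      have e: "\<phi> C \<inter> R = C" using L2[OF C R(1) R(2)] .
      have "C \<noteq> {}" using C DF(2) by blast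
      then have "\<phi> C \<inter> R \<in> Phi T (roots F)" using PhiI[OF _ Rr, of "\<phi> C"] m1 C e by simp
      then show "C \<in> Phi T (roots F)" using e by simp
    qed
    show "Phi T (roots F) \<subseteq> F"
    proof
      fix C assume "C \<in> Phi T (roots F)"
      then obtain E J where EJ: "E \<in> T" "J \<in> roots F" "C = E \<inter> J" "C \<noteq> {}" by (rule PhiE)
      have "J \<in> F" using EJ(2) unfolding roots_def by blast
      then show "C \<in> F" using restr_in[OF _ EJ(1)] EJ(3,4) by blast
    qed
  qed
qed


lemma car_eq: "carrier (forest_interval I T) = {F. forest_on I F \<and> forest_le (bot_forest I) F \<and> forest_le F T}"
  by (simp add: forest_interval_def)

lemma le_eq: "le (forest_interval I T) = forest_le"
  by (simp add: forest_interval_def)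

lemma eq_eq: "eq (forest_interval I T) = (=)"
  by (simp add: forest_interval_def)

lemma part_top: "part I {I}" unfolding part_def using Ine by blast

lemma valid_top: "valid T {I}" unfolding valid_def by blast

lemma Phi_in_car: assumes "part I P" "valid T P" shows "Phi T P \<in> carrier (forest_interval I T)"
proof -
  have r: "refines P {I}" unfolding refines_def using part_sub[OF assms(1)] by blast
  have "forest_le (Phi T P) (Phi T {I})" using Phi_le[OF assms part_top r] .
  then have "forest_le (Phi T P) T" using Phi_top by simp
  moreover have "forest_on I (Phi T P)" using Phi_forest[OF assms(1)] .
  moreover have "forest_le (bot_forest I) (Phi T P)" using bot_le[OF calculation(2)] .
  ultimately show ?thesis unfolding car_eq by blast
qed

lemma car_props: assumes "F \<in> carrier (forest_interval I T)"
  shows "part I (roots F)" "valid T (roots F)" "F = Phi T (roots F)" "forest_on I F"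
proof -
  have "forest_on I F" "forest_le F T" using assms unfolding car_eq by blast+
  then show "part I (roots F)" "valid T (roots F)" "F = Phi T (roots F)" "forest_on I F"
    using carrier_char by blast+
qed

lemma le_iff: assumes F: "F \<in> carrier (forest_interval I T)" and G: "G \<in> carrier (forest_interval I T)"
  shows "forest_le F G \<longleftrightarrow> refines (roots F) (roots G)"
proof
  assume "forest_le F G"
  then show "refines (roots F) (roots G)" using le_refines[OF fin car_props(4)[OF F] car_props(4)[OF G]] by blast
next
  assume r: "refines (roots F) (roots G)"
  have "forest_le (Phi T (roots F)) (Phi T (roots G))"
    using Phi_le[OF car_props(1,2)[OF F] car_props(1)[OF G] r] .
  then show "forest_le F G" using car_props(3)[OF F, symmetric] car_props(3)[OF G, symmetric] by simp
qed

lemma po: "partial_order (forest_interval I T)"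
proof -
  have refl: "forest_le F F" if "F \<in> carrier (forest_interval I T)" for F
    using le_iff[OF that that] refines_refl by blast
  have anti: "F = G" if F: "F \<in> carrier (forest_interval I T)" and G: "G \<in> carrier (forest_interval I T)"
    and "forest_le F G" "forest_le G F" for F G
  proof -
    have "roots F = roots G" using refines_antisym[OF car_props(1)[OF F] car_props(1)[OF G]]
        le_iff[OF F G] le_iff[OF G F] that(3,4) by blast
    then show ?thesis using car_props(3)[OF F] car_props(3)[OF G] by simp
  qed
  have trans: "forest_le F H" if F: "F \<in> carrier (forest_interval I T)" and G: "G \<in> carrier (forest_interval I T)"
    and H: "H \<in> carrier (forest_interval I T)" and "forest_le F G" "forest_le G H" for F G H
  proof -
    have "refines (roots F) (roots G)" "refines (roots G) (roots H)" using le_iff F G H that(4,5) by blast+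
    then have "refines (roots F) (roots H)" by (rule refines_trans)
    then show ?thesis using le_iff[OF F H] by blast
  qed
  show ?thesis
    apply unfold_locales
    apply (simp_all only: eq_eq le_eq)
    using refl anti trans by blast+
qed

lemma lattice_interval: "lattice (forest_interval I T)"
proof -
  interpret p: partial_order "forest_interval I T" by (rule po)
  let ?L = "forest_interval I T"
  have Tc: "T \<in> carrier ?L" using Phi_in_car[OF part_top valid_top] Phi_top by simp
  have top: "\<exists>g. greatest ?L g (carrier ?L)"
  proof (intro exI[of _ T])
    show "greatest ?L T (carrier ?L)" unfolding greatest_def using Tc by (simp add: le_eq car_eq)
  qed
  have inf: "\<exists>i. greatest ?L i (Lower ?L A)" if A: "A \<subseteq> carrier ?L" "A \<noteq> {}" for A
  proof -
    let ?PP = "roots ` A"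
    have pv: "\<forall>Q\<in>?PP. part I Q \<and> valid T Q" using car_props A(1) by blast
    have pp: "\<forall>Q\<in>?PP. part I Q" using pv by blast
    let ?M = "mt I ?PP"
    have Mp: "part I ?M" using mt_part[OF pp] .
    have Mv: "valid T ?M" using mt_valid[OF pv] .
    let ?i = "Phi T ?M"
    have ic: "?i \<in> carrier ?L" using Phi_in_car[OF Mp Mv] .
    have ir: "roots ?i = ?M" using Phi_roots[OF Mp] .
    have low: "?i \<in> Lower ?L A" unfolding Lower_def
    proof (intro IntI CollectI allI impI)
      fix x assume x: "x \<in> A \<inter> carrier ?L"
      have "refines ?M (roots x)" using mt_ref[OF pp] x by blast
      moreover have xc: "x \<in> carrier ?L" using x by blast
      ultimately have "forest_le ?i x" using le_iff[OF ic xc] ir by simp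
      then show "?i \<sqsubseteq>\<^bsub>?L\<^esub> x" by (simp add: le_eq)
    qed (rule ic)
    have gr: "l \<sqsubseteq>\<^bsub>?L\<^esub> ?i" if l: "l \<in> Lower ?L A" for l
    proof -
      have lc: "l \<in> carrier ?L" using l unfolding Lower_def by blast
      have "\<forall>x\<in>A. l \<sqsubseteq>\<^bsub>?L\<^esub> x" using l A(1) unfolding Lower_def by blast
      then have "\<forall>x\<in>A. forest_le l x" by (simp add: le_eq)
      then have "\<forall>Q\<in>?PP. refines (roots l) Q" using le_iff[OF lc] A(1) by blast
      then have "refines (roots l) ?M" using mt_glb[OF car_props(1)[OF lc]] by blast
      then have "forest_le l ?i" using le_iff[OF lc ic] ir by simp
      then show ?thesis by (simp add: le_eq)
    qed
    have "greatest ?L ?i (Lower ?L A)" unfolding greatest_def using low gr by (simp add: Lower_def)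
    then show ?thesis by blast
  qed
  have "complete_lattice ?L" using p.complete_lattice_criterion1[OF top inf] by blast
  then show ?thesis by (rule complete_lattice_lattice)
qed

end


theorem theorem3p5:
  fixes I :: "'a set" and T :: "'a set set"
  assumes "finite I" and "tree_on I T"
  shows "lattice (forest_interval I T)"
proof -
  interpret tsetup I T using assms by (rule tsetup.intro)
  show ?thesis by (rule lattice_interval)
qed

end
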